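(* Let $s\in(0,1)$, $\alpha>0$, let $\Omega\subset\mathbb{R}^n$ be open, and let $u\in L_s(\mathbb{R}^n)$ with $e^{\alpha u}\in L^1(\Omega)$. Then $t^{1-2s}e^{\alpha\overline{u}}\in L^1_{\mathrm{loc}}(\Omega\times[0,\infty))$; that is, for every open $\Omega_0\Subset\Omega$ and every $R>0$, $\int_0^R\int_{\Omega_0}t^{1-2s}e^{\alpha\overline{u}(x,t)}dxdt<\infty$.
   Context: $L_s(\mathbb{R}^n)=\{u\in L^1_{\mathrm{loc}}:\int\frac{|u|}{1+|x|^{n+2s}}<\infty\}$. $\overline{u}(x,t)=\int_{\mathbb{R}^n}P(X,y)u(y)dy$ for $X=(x,t)$, $t>0$, with $P(X,y)=d_{n,s}\frac{t^{2s}}{|(x-y,t)|^{n+2s}}$ and $d_{n,s}>0$ such that $\int P(X,y)dy=1$. *)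

theory Defs
  imports "HOL-Analysis.Analysis"
begin

text \<open>Points of R^n are elements of a Euclidean space 'a with n = DIM('a).\<close>

definition L_s :: "real \<Rightarrow> ('a::euclidean_space \<Rightarrow> real) set" where
  "L_s s = {u. u \<in> borel_measurable lebesgue
              \<and> (\<forall>K. compact K \<longrightarrow> set_integrable lebesgue K u)
              \<and> integrable lebesgue
                  (\<lambda>x. \<bar>u x\<bar> / (1 + norm x powr (real DIM('a) + 2 * s)))}"

definition kern :: "real \<Rightarrow> 'a::euclidean_space \<Rightarrow> real \<Rightarrow> 'a \<Rightarrow> real" where
  "kern s x t y = t powr (2 * s) /
      (sqrt (norm (x - y)^2 + t^2)) powr (real DIM('a) + 2 * s)"

text \<open>The constant d_{n,s}, chosen so that the kernel integrates to 1 in y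
  (the integral of kern is independent of (x,t) with t > 0; we normalize at x = 0, t = 1).\<close>
definition poisson_const :: "real \<Rightarrow> 'a::euclidean_space itself \<Rightarrow> real" where
  "poisson_const s _ = 1 / (LINT y|lebesgue. kern s (0::'a) 1 y)"

definition poisson_kernel :: "real \<Rightarrow> 'a::euclidean_space \<Rightarrow> real \<Rightarrow> 'a \<Rightarrow> real" where
  "poisson_kernel s x t y = poisson_const s TYPE('a) * kern s x t y"

definition ext :: "real \<Rightarrow> ('a::euclidean_space \<Rightarrow> real) \<Rightarrow> 'a \<Rightarrow> real \<Rightarrow> real" where
  "ext s u x t = (LINT y|lebesgue. poisson_kernel s x t y * u y)"

end

theory Submission
  imports Defs
begin

lemma one_dim_fin:
  fixes q :: real assumes q: "q > 1/2"
  shows "(\<integral>\<^sup>+x. ennreal ((1 + x^2) powr (-q)) \<partial>lborel) < \<infinity>"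
proof -
  have e: "-2*q < -1" using q by simp
  have h1: "((\<lambda>x. x powr (-2*q)) has_integral -(1 powr (-2*q+1)) / (-2*q+1)) {1..}"
    using has_integral_powr_to_inf[OF e, of 1] by simp
  have I1: "(\<integral>\<^sup>+x. ennreal (indicator {1..} x * x powr (-2*q)) \<partial>lborel) = ennreal (-(1 powr (-2*q+1)) / (-2*q+1))"
    by (rule nn_integral_has_integral_lebesgue[OF _ h1]) simp
  have I2: "(\<integral>\<^sup>+x. ennreal (indicator {1..} (-x) * (-x) powr (-2*q)) \<partial>lborel)
      = (\<integral>\<^sup>+x. ennreal (indicator {1..} x * x powr (-2*q)) \<partial>lborel)"
    using nn_integral_real_affine[of "\<lambda>x. ennreal (indicator {1..} x * x powr (-2*q))" "-1" 0]
    by simp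
  have bound: "ennreal ((1 + x^2) powr (-q)) \<le> indicator {-1..1} x + ennreal (indicator {1..} x * x powr (-2*q))
        + ennreal (indicator {1..} (-x) * (-x) powr (-2*q))" for x :: real
  proof (cases "\<bar>x\<bar> \<le> 1")
    case True
    have "(1 + x^2) powr (-q) \<le> 1"
      using q by (simp add: powr_minus inverse_le_1_iff ge_one_powr_ge_zero)
    then have "ennreal ((1 + x^2) powr (-q)) \<le> indicator {-1..1} x"
    proof -
      have "indicator {-1..1} x = (1::ennreal)" using True by (auto simp: indicator_def)
      then show ?thesis using \<open>(1 + x^2) powr (-q) \<le> 1\<close> by simp
    qed
    then show ?thesis by (intro add_increasing2) auto
  next
    case False
    have "(1 + x^2) powr (-q) \<le> (x^2) powr (-q)"
      by (rule powr_mono2') (use q False in auto)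
    also have "(x^2) powr (-q) = \<bar>x\<bar> powr (-2*q)"
    proof -
      have "x^2 = \<bar>x\<bar> powr 2" using False by (simp add: powr_numeral)
      then have "(x^2) powr (-q) = (\<bar>x\<bar> powr 2) powr (-q)" by simp
      also have "\<dots> = \<bar>x\<bar> powr (2 * -q)" by (rule powr_powr)
      finally show ?thesis by simp
    qed
    finally show ?thesis using False by (auto simp: indicator_def abs_if split: if_splits)
  qed
  have "(\<integral>\<^sup>+x. ennreal ((1 + x^2) powr (-q)) \<partial>lborel) \<le>
     (\<integral>\<^sup>+x. indicator {-1..1} x + ennreal (indicator {1..} x * x powr (-2*q))
        + ennreal (indicator {1..} (-x) * (-x) powr (-2*q)) \<partial>lborel)"
    by (rule nn_integral_mono) (rule bound)
  also have "\<dots> = emeasure lborel {-1..1::real} + (\<integral>\<^sup>+x. ennreal (indicator {1..} x * x powr (-2*q)) \<partial>lborel)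
        + (\<integral>\<^sup>+x. ennreal (indicator {1..} (-x) * (-x) powr (-2*q)) \<partial>lborel)"
    by (subst nn_integral_add; (subst nn_integral_add)?) auto
  also have "\<dots> < \<infinity>" unfolding I2 I1 by simp
  finally show ?thesis .
qed

lemma kern01_eq:
  fixes s :: real
  shows "kern s (0::'a::euclidean_space) 1 y = (1 + norm y ^ 2) powr (- ((real DIM('a) + 2 * s) / 2))"
proof -
  define p where "p = real DIM('a) + 2 * s"
  have A: "0 \<le> 1 + norm y ^ 2" by simp
  have "sqrt (norm (0 - y) ^ 2 + 1) = (1 + norm y ^ 2) powr (1/2)"
    by (subst powr_half_sqrt[OF A]) (simp add: add.commute)
  then have "sqrt (norm (0 - y) ^ 2 + 1) powr p = (1 + norm y ^ 2) powr (1/2 * p)"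
    by (simp only: powr_powr)
  then have "kern s (0::'a) 1 y = 1 / (1 + norm y ^ 2) powr (p / 2)"
    unfolding kern_def p_def[symmetric] by simp
  also have "\<dots> = (1 + norm y ^ 2) powr (- (p / 2))"
    by (simp add: powr_minus_divide)
  finally show ?thesis unfolding p_def .
qed

lemma kern01_bound:
  fixes s :: real assumes s: "0 < s"
  shows "kern s (0::'a::euclidean_space) 1 y \<le> (\<Prod>b\<in>Basis. (1 + (y \<bullet> b)^2) powr (-((real DIM('a) + 2 * s)/(2*DIM('a)))))"
proof -
  define q where "q = (real DIM('a) + 2 * s)/(2*DIM('a))"
  have "(\<Prod>b\<in>(Basis::'a set). (1 + norm y ^ 2) powr (-q)) \<le> (\<Prod>b\<in>Basis. (1 + (y \<bullet> b)^2) powr (-q))"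
  proof (rule prod_mono, safe)
    fix b :: 'a assume b: "b \<in> Basis"
    show "0 \<le> (1 + norm y ^ 2) powr (-q)" by simp
    have "\<bar>y \<bullet> b\<bar> \<le> norm y" using Basis_le_norm[OF b] .
    then have "\<bar>y \<bullet> b\<bar>^2 \<le> norm y ^ 2"
      by (rule power_mono) simp
    then have "(y \<bullet> b)^2 \<le> norm y ^ 2"
      by (simp only: power2_abs)
    then show "(1 + norm y ^ 2) powr (-q) \<le> (1 + (y \<bullet> b)^2) powr (-q)"
      using s by (intro powr_mono2') (auto simp: q_def add_pos_nonneg)
  qed
  also have "(\<Prod>b\<in>(Basis::'a set). (1 + norm y ^ 2) powr (-q)) = ((1 + norm y ^ 2) powr (-q)) ^ DIM('a)"
    by simp
  also have "\<dots> = (1 + norm y ^ 2) powr (real DIM('a) * (-q))"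
    by (rule powr_power) (simp add: add_nonneg_eq_0_iff)
  also have "real DIM('a) * (-q) = - ((real DIM('a) + 2 * s) / 2)" by (simp add: q_def)
  finally show ?thesis unfolding kern01_eq q_def .
qed

lemma kern01_fin:
  fixes s :: real assumes s: "0 < s"
  shows "(\<integral>\<^sup>+y. ennreal (kern s (0::'a::euclidean_space) 1 y) \<partial>lborel) < \<infinity>"
proof -
  define q where "q = (real DIM('a) + 2 * s)/(2*DIM('a))"
  have q: "q > 1/2" using s by (simp add: q_def field_simps)
  have "(\<integral>\<^sup>+y. ennreal (kern s (0::'a) 1 y) \<partial>lborel) \<le> (\<integral>\<^sup>+(y::'a). (\<Prod>b\<in>Basis. ennreal ((1 + (y \<bullet> b)^2) powr (-q))) \<partial>lborel)"
  proof (rule nn_integral_mono)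
    fix y :: 'a
    have "kern s (0::'a) 1 y \<le> (\<Prod>b\<in>Basis. (1 + (y \<bullet> b)^2) powr (-q))"
      using kern01_bound[OF s, of y] unfolding q_def .
    then show "ennreal (kern s (0::'a) 1 y) \<le> (\<Prod>b\<in>Basis. ennreal ((1 + (y \<bullet> b)^2) powr (-q)))"
      by (simp add: prod_ennreal) (rule ennreal_leI)
  qed
  also have "\<dots> = (\<Prod>b\<in>(Basis::'a set). (\<integral>\<^sup>+x. ennreal ((1 + x^2) powr (-q)) \<partial>lborel))"
    by (rule nn_integral_lborel_prod) auto
  also have "\<dots> < \<infinity>"
    using one_dim_fin[OF q] by (simp add: power_less_top_ennreal)
  finally show ?thesis .
qed

lemma kern_meas[measurable]: "(\<lambda>y. kern s x t y) \<in> borel_measurable borel"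
  unfolding kern_def by measurable

lemma kern_sym: "kern s x t y = kern s y t x"
  unfolding kern_def by (simp add: norm_minus_commute)

lemma kern_nonneg: "0 \<le> kern s x t y"
  unfolding kern_def by simp

lemma kern_scale:
  fixes x :: "'a::euclidean_space" assumes t: "0 < t"
  shows "t ^ DIM('a) * kern s x t (x + t *\<^sub>R z) = kern s 0 1 z"
proof -
  have "sqrt (norm (x - (x + t *\<^sub>R z))^2 + t^2) = t * sqrt (norm z ^ 2 + 1)"
  proof -
    have "norm (x - (x + t *\<^sub>R z))^2 + t^2 = t^2 * (norm z ^ 2 + 1)"
      using t by (simp add: power_mult_distrib algebra_simps)
    then show ?thesis using t by (simp add: real_sqrt_mult)
  qed
  then have "kern s x t (x + t *\<^sub>R z) = t powr (2 * s) / ((t * sqrt (norm z ^ 2 + 1)) powr (real DIM('a) + 2 * s))"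
    unfolding kern_def by simp
  also have "\<dots> = t powr (2 * s) / (t powr (real DIM('a) + 2 * s) * sqrt (norm z ^ 2 + 1) powr (real DIM('a) + 2 * s))"
    using t by (simp add: powr_mult)
  also have "\<dots> = 1 / (t powr (real DIM('a)) * sqrt (norm z ^ 2 + 1) powr (real DIM('a) + 2 * s))"
    using t by (simp add: powr_add field_simps)
  finally show ?thesis using t by (simp add: kern_def powr_realpow)
qed

lemma kern_nn_integral:
  fixes x :: "'a::euclidean_space" assumes t: "0 < t"
  shows "(\<integral>\<^sup>+y. ennreal (kern s x t y) \<partial>lborel) = (\<integral>\<^sup>+y. ennreal (kern s (0::'a) 1 y) \<partial>lborel)"
proof -
  have "(\<integral>\<^sup>+y. ennreal (kern s x t y) \<partial>lborel) =
     (\<integral>\<^sup>+y. ennreal (kern s x t y) \<partial>density (distr lborel borel (\<lambda>z. x + t *\<^sub>R z)) (\<lambda>_. \<bar>t\<bar>^DIM('a)))"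
    using lborel_affine[of t x] t by simp
  also have "\<dots> = (\<integral>\<^sup>+z. ennreal (\<bar>t\<bar>^DIM('a)) * ennreal (kern s x t (x + t *\<^sub>R z)) \<partial>lborel)"
    by (simp add: nn_integral_density nn_integral_distr)
  also have "\<dots> = (\<integral>\<^sup>+z. ennreal (kern s (0::'a) 1 z) \<partial>lborel)"
    using t by (intro nn_integral_cong) (simp add: ennreal_mult'[symmetric] kern_scale kern_nonneg)
  finally show ?thesis .
qed

lemma kern_meas_leb[measurable]: "(\<lambda>y. kern s x t y) \<in> borel_measurable lebesgue"
  by (rule measurable_completion) simp

lemma kern_integrable_lborel:
  fixes x :: "'a::euclidean_space"
  assumes s: "0 < s" and t: "0 < t"
  shows "integrable lborel (kern s x t)"
proof (rule integrableI_nonneg)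
  show "kern s x t \<in> borel_measurable lborel" by simp
  show "AE y in lborel. 0 \<le> kern s x t y" by (simp add: kern_nonneg)
  show "(\<integral>\<^sup>+y. ennreal (kern s x t y) \<partial>lborel) < \<infinity>"
    using kern_nn_integral[OF t, of s x] kern01_fin[OF s, where 'a='a] by simp
qed

lemma kern_integral_lborel:
  fixes x :: "'a::euclidean_space"
  assumes t: "0 < t"
  shows "integral\<^sup>L lborel (kern s x t) = integral\<^sup>L lborel (kern s (0::'a) 1)"
proof -
  have "integral\<^sup>L lborel (kern s x t) = enn2real (\<integral>\<^sup>+y. ennreal (kern s x t y) \<partial>lborel)"
    by (rule integral_eq_nn_integral) (simp_all add: kern_nonneg)
  also have "\<dots> = enn2real (\<integral>\<^sup>+y. ennreal (kern s (0::'a) 1 y) \<partial>lborel)"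
    using kern_nn_integral[OF t, of s x] by simp
  also have "\<dots> = integral\<^sup>L lborel (kern s (0::'a) 1)"
    by (rule integral_eq_nn_integral[symmetric]) (simp_all add: kern_nonneg)
  finally show ?thesis .
qed

lemma kern01_pos: "0 < kern s (0::'a::euclidean_space) 1 y"
proof -
  have "0 < (norm y)^2 + 1" by (simp add: add_nonneg_pos)
  then show ?thesis unfolding kern_def by simp
qed

lemma I0_pos:
  assumes s: "0 < s"
  shows "0 < integral\<^sup>L lborel (kern s (0::'a::euclidean_space) 1)"
proof -
  have int: "integrable lborel (kern s (0::'a) 1)" by (rule kern_integrable_lborel[OF s]) simp
  have nn: "0 \<le> integral\<^sup>L lborel (kern s (0::'a) 1)" by (simp add: kern_nonneg)
  have "integral\<^sup>L lborel (kern s (0::'a) 1) \<noteq> 0"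
  proof
    assume "integral\<^sup>L lborel (kern s (0::'a) 1) = 0"
    then have "AE y in lborel. kern s (0::'a) 1 y = 0"
      using integral_nonneg_eq_0_iff_AE[OF int] by (simp add: kern_nonneg)
    then have "AE y in lborel::'a measure. False"
      by (rule AE_mp) (simp add: less_imp_neq[OF kern01_pos, symmetric])
    then have "ae_filter (lborel::'a measure) = bot" using trivial_limit_def by blast
    then show False by (simp add: ae_filter_eq_bot_iff)
  qed
  with nn show ?thesis by simp
qed

lemma poisson_const_eq:
  "poisson_const s TYPE('a::euclidean_space) = 1 / integral\<^sup>L lborel (kern s (0::'a) 1)"
  unfolding poisson_const_def by (simp add: integral_completion)

lemma poisson_const_nonneg: "0 \<le> poisson_const s TYPE('a::euclidean_space)"
  unfolding poisson_const_eq by (simp add: kern_nonneg)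

lemma pk_nonneg: "0 \<le> poisson_kernel s x t y"
  unfolding poisson_kernel_def by (simp add: kern_nonneg poisson_const_nonneg)

lemma pk_sym: "poisson_kernel s x t y = poisson_kernel s y t x"
  unfolding poisson_kernel_def by (simp add: kern_sym[of s x])

lemma pk_meas[measurable]: "(\<lambda>y. poisson_kernel s x t y) \<in> borel_measurable borel"
  unfolding poisson_kernel_def by measurable

lemma pk_meas_leb[measurable]: "(\<lambda>y. poisson_kernel s x t y) \<in> borel_measurable lebesgue"
  by (rule measurable_completion) simp

lemma pk_integrable:
  fixes x :: "'a::euclidean_space"
  assumes s: "0 < s" and t: "0 < t"
  shows "integrable lebesgue (poisson_kernel s x t)"
proof -
  have "integrable lborel (\<lambda>y. poisson_const s TYPE('a) * kern s x t y)"
    by (intro integrable_mult_right kern_integrable_lborel[OF s t])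
  then show ?thesis unfolding poisson_kernel_def[abs_def]
    by (subst integrable_completion) simp_all
qed

lemma pk_integral:
  fixes x :: "'a::euclidean_space"
  assumes s: "0 < s" and t: "0 < t"
  shows "(LINT y|lebesgue. poisson_kernel s x t y) = 1"
proof -
  have "(LINT y|lebesgue. poisson_kernel s x t y) = (LINT y|lborel. poisson_const s TYPE('a) * kern s x t y)"
    unfolding poisson_kernel_def by (subst integral_completion) simp_all
  also have "\<dots> = poisson_const s TYPE('a) * integral\<^sup>L lborel (kern s (0::'a) 1)"
    using kern_integral_lborel[OF t, of s x] by simp
  also have "\<dots> = 1" using I0_pos[OF s, where 'a='a] by (simp add: poisson_const_eq)
  finally show ?thesis .
qed

lemma pk_nn_integral:
  fixes x :: "'a::euclidean_space"
  assumes s: "0 < s" and t: "0 < t"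
  shows "(\<integral>\<^sup>+y. ennreal (poisson_kernel s x t y) \<partial>lebesgue) = 1"
  using nn_integral_eq_integral[OF pk_integrable[OF s t, of x]] pk_integral[OF s t, of x]
  by (simp add: pk_nonneg)

lemma exp_jensen:
  fixes w f :: "'b \<Rightarrow> real"
  assumes w: "integrable M w" and wnn: "\<And>y. 0 \<le> w y" and w1: "integral\<^sup>L M w = 1"
    and wf: "integrable M (\<lambda>y. w y * f y)" and we: "integrable M (\<lambda>y. w y * exp (f y))"
  shows "exp (LINT y|M. w y * f y) \<le> (LINT y|M. w y * exp (f y))"
proof -
  define m where "m = (LINT y|M. w y * f y)"
  have pt: "exp m * w y + exp m * (w y * f y) - exp m * m * w y \<le> w y * exp (f y)" for y
  proof -
    have "1 + (f y - m) \<le> exp (f y - m)" by (rule exp_ge_add_one_self)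
    then have "exp m * (1 + (f y - m)) \<le> exp m * exp (f y - m)" by simp
    also have "\<dots> = exp (f y)" by (simp add: exp_diff)
    finally have "exp m * (1 + (f y - m)) \<le> exp (f y)" .
    then have "w y * (exp m * (1 + (f y - m))) \<le> w y * exp (f y)"
      by (rule mult_left_mono[OF _ wnn])
    then show ?thesis by (simp add: algebra_simps)
  qed
  have "exp m = (LINT y|M. exp m * w y + exp m * (w y * f y) - exp m * m * w y)"
    using w wf w1 by (simp add: m_def)
  also have "\<dots> \<le> (LINT y|M. w y * exp (f y))"
    using w wf we pt by (intro Bochner_Integration.integral_mono) auto
  finally show ?thesis unfolding m_def .
qed

lemma sigma_finite_lebesgue: "sigma_finite_measure (lebesgue :: 'a::euclidean_space measure)"
proof -
  obtain A :: "'a set set" where A: "countable A" "A \<subseteq> sets lborel" "\<Union>A = space lborel"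
      "\<forall>a\<in>A. emeasure lborel a \<noteq> \<infinity>"
    using sigma_finite_measure.sigma_finite_countable[OF sigma_finite_lborel] by blast
  show ?thesis
  proof
    show "\<exists>A::'a set set. countable A \<and> A \<subseteq> sets lebesgue \<and> \<Union>A = space lebesgue \<and> (\<forall>a\<in>A. emeasure lebesgue a \<noteq> \<infinity>)"
      using A by (intro exI[of _ A]) auto
  qed
qed

lemma kern_pair_borel:
  "(\<lambda>z::'a::euclidean_space \<times> 'a. kern s (fst z) t (snd z)) \<in> borel_measurable borel"
proof -
  have d: "(\<lambda>z::'a \<times> 'a. snd z - fst z) \<in> borel_measurable borel"
    by (intro borel_measurable_continuous_onI continuous_intros)
  have "(\<lambda>z::'a \<times> 'a. kern s 0 t (snd z - fst z)) \<in> borel_measurable borel"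
    by (rule measurable_compose[OF d kern_meas])
  moreover have "kern s 0 t (snd z - fst z) = kern s (fst z) t (snd z)" for z :: "'a \<times> 'a"
    unfolding kern_def by (simp add: norm_minus_commute)
  ultimately show ?thesis by simp
qed

lemma pk_pair_meas[measurable]:
  "(\<lambda>z. poisson_kernel s (fst z) t (snd z)) \<in> borel_measurable (lebesgue \<Otimes>\<^sub>M (lebesgue :: 'a::euclidean_space measure))"
proof -
  have idm: "(\<lambda>x. x) \<in> (lebesgue :: 'a measure) \<rightarrow>\<^sub>M lborel"
    using measurable_completion[OF measurable_ident[of "lborel :: 'a measure"]] by (simp add: id_def)
  have pm: "(\<lambda>z. (fst z, snd z)) \<in> ((lebesgue :: 'a measure) \<Otimes>\<^sub>M (lebesgue :: 'a measure)) \<rightarrow>\<^sub>M (lborel \<Otimes>\<^sub>M lborel)"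
  proof (rule measurable_Pair)
    show "fst \<in> ((lebesgue :: 'a measure) \<Otimes>\<^sub>M (lebesgue :: 'a measure)) \<rightarrow>\<^sub>M lborel"
      using measurable_compose[OF measurable_fst[of "lebesgue :: 'a measure" "lebesgue :: 'a measure"] idm] by simp
    show "snd \<in> ((lebesgue :: 'a measure) \<Otimes>\<^sub>M (lebesgue :: 'a measure)) \<rightarrow>\<^sub>M lborel"
      using measurable_compose[OF measurable_snd[of "lebesgue :: 'a measure" "lebesgue :: 'a measure"] idm] by simp
  qed
  have km: "(\<lambda>z::'a \<times> 'a. kern s (fst z) t (snd z)) \<in> borel_measurable (lborel \<Otimes>\<^sub>M lborel)"
    unfolding lborel_prod using kern_pair_borel by simp
  have "(\<lambda>z. kern s (fst z) t (snd z)) \<in> borel_measurable ((lebesgue :: 'a measure) \<Otimes>\<^sub>M (lebesgue :: 'a measure))"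
    using measurable_compose[OF pm km] by simp
  then show ?thesis unfolding poisson_kernel_def by measurable
qed

lemma kern_le_near:
  fixes x y :: "'a::euclidean_space"
  assumes s: "0 < s" and t: "0 < t"
  shows "kern s x t y \<le> t powr (- real DIM('a))"
proof -
  define p where "p = real DIM('a) + 2 * s"
  have p: "0 \<le> p" using s by (simp add: p_def)
  have S: "t \<le> sqrt (norm (x - y)^2 + t^2)"
    using t by (intro real_le_rsqrt) simp
  have "t powr p \<le> sqrt (norm (x - y)^2 + t^2) powr p"
    using S t p by (intro powr_mono2) auto
  then have "kern s x t y \<le> t powr (2 * s) / t powr p"
    unfolding kern_def p_def[symmetric] using t
    by (intro divide_left_mono) (auto intro: mult_pos_pos)
  also have "\<dots> = t powr (- real DIM('a))"
    using t by (simp add: p_def powr_diff[symmetric])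
  finally show ?thesis .
qed

lemma kern_le_far:
  fixes x y :: "'a::euclidean_space"
  assumes s: "0 < s" and t: "0 < t" "t \<le> R" and d: "0 < \<delta>" "\<delta> \<le> norm (x - y)"
    and M: "0 \<le> M" "norm x \<le> M"
  shows "kern s x t y \<le> R powr (2 * s) * (\<delta> powr (- (real DIM('a) + 2 * s)) + (1 + M / \<delta>) powr (real DIM('a) + 2 * s))
           / (1 + norm y powr (real DIM('a) + 2 * s))"
proof -
  define p where "p = real DIM('a) + 2 * s"
  define D where "D = norm (x - y)"
  define Cf where "Cf = \<delta> powr (- p) + (1 + M / \<delta>) powr p"
  have p: "0 \<le> p" using s by (simp add: p_def)
  have D: "0 < D" "\<delta> \<le> D" using d by (auto simp: D_def)
  have Cf: "0 < Cf" unfolding Cf_def using d by (simp add: add_pos_nonneg)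
  have S: "D \<le> sqrt (norm (x - y)^2 + t^2)"
    unfolding D_def by (intro real_le_rsqrt) simp
  have "D powr p \<le> sqrt (norm (x - y)^2 + t^2) powr p"
    using S D p by (intro powr_mono2) auto
  moreover have "t powr (2 * s) \<le> R powr (2 * s)"
    using t s by (intro powr_mono2) auto
  ultimately have k1: "kern s x t y \<le> R powr (2 * s) / D powr p"
    unfolding kern_def p_def[symmetric] using D
    by (intro frac_le) auto
  have one: "1 \<le> \<delta> powr (- p) * D powr p"
  proof -
    have "1 \<le> D / \<delta>" using D d by simp
    then have "1 \<le> (D / \<delta>) powr p" using p by (intro ge_one_powr_ge_zero) auto
    also have "(D / \<delta>) powr p = \<delta> powr (- p) * D powr p"
    proof -
      have "(D / \<delta>) powr p = D powr p / \<delta> powr p" using D d by (simp add: powr_divide)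
      then show ?thesis by (simp add: powr_minus divide_inverse mult.commute)
    qed
    finally show ?thesis .
  qed
  have ny: "norm y \<le> D * (1 + M / \<delta>)"
  proof -
    have "norm y \<le> norm x + D" unfolding D_def
      by (metis norm_minus_commute norm_triangle_sub add.commute)
    also have "\<dots> \<le> M + D" using M by simp
    also have "M \<le> M * (D / \<delta>)"
    proof -
      have "M * \<delta> \<le> M * D" using M D by (intro mult_left_mono) auto
      then show ?thesis using d by (simp add: field_simps)
    qed
    then have "M + D \<le> D * (1 + M / \<delta>)" using d by (simp add: field_simps)
    finally show ?thesis using \<open>M \<le> M * (D / \<delta>)\<close> d by (simp add: field_simps)
  qed
  have two: "norm y powr p \<le> (1 + M / \<delta>) powr p * D powr p"
  proof -
    have "norm y powr p \<le> (D * (1 + M / \<delta>)) powr p"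
      using ny p by (intro powr_mono2) auto
    also have "\<dots> = (1 + M / \<delta>) powr p * D powr p"
      using D d M by (simp add: powr_mult mult.commute)
    finally show ?thesis .
  qed
  have b: "1 + norm y powr p \<le> Cf * D powr p"
    using one two unfolding Cf_def by (simp add: distrib_right)
  have "R powr (2 * s) / D powr p = R powr (2 * s) * Cf / (Cf * D powr p)"
    using Cf by simp
  also have "\<dots> \<le> R powr (2 * s) * Cf / (1 + norm y powr p)"
    using b Cf D by (intro divide_left_mono) (auto intro!: add_pos_nonneg mult_pos_pos)
  finally show ?thesis using k1 unfolding Cf_def p_def by simp
qed

lemma pk_le_near:
  fixes x y :: "'a::euclidean_space"
  assumes s: "0 < s" and t: "0 < t"
  shows "poisson_kernel s x t y \<le> poisson_const s TYPE('a) * t powr (- real DIM('a))"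
  unfolding poisson_kernel_def
  by (intro mult_left_mono kern_le_near[OF s t] poisson_const_nonneg)

lemma pointwise_bound:
  fixes u :: "'a::euclidean_space \<Rightarrow> real" and A \<Omega> :: "'a set"
  assumes s: "0 < s" and al: "0 < \<alpha>" and t: "0 < t"
    and uL: "u \<in> L_s s"
    and eint: "set_integrable lebesgue \<Omega> (\<lambda>y. exp (\<alpha> * u y))"
    and A\<Omega>: "A \<subseteq> \<Omega>" and Ameas: "A \<in> sets lebesgue" and Ab: "bounded A"
    and far: "\<And>y. y \<notin> A \<Longrightarrow> poisson_kernel s x t y \<le> C / (1 + norm y powr (real DIM('a) + 2 * s))"
    and C: "0 \<le> C"
  shows "exp (\<alpha> * ext s u x t) \<le> exp (\<alpha> * (C * (LINT y|lebesgue. \<bar>u y\<bar> / (1 + norm y powr (real DIM('a) + 2 * s)))))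
            * ((LINT y|lebesgue. poisson_kernel s x t y * (indicator A y * exp (\<alpha> * u y))) + 1)"
    and "integrable lebesgue (\<lambda>y. poisson_kernel s x t y * (indicator A y * exp (\<alpha> * u y)))"
proof -
  define p where "p = real DIM('a) + 2 * s"
  define P where "P = poisson_kernel s x t"
  define N where "N = poisson_const s TYPE('a) * t powr (- real DIM('a))"
  define w where "w y = \<bar>u y\<bar> / (1 + norm y powr p)" for y
  define g where "g y = indicator A y * exp (\<alpha> * u y)" for y
  have um[measurable]: "u \<in> borel_measurable lebesgue" using uL by (simp add: L_s_def)
  have Am[measurable]: "A \<in> sets lebesgue" by (rule Ameas)
  have Pm[measurable]: "P \<in> borel_measurable lebesgue" unfolding P_def by simp
  have Pnn: "0 \<le> P y" for y unfolding P_def by (rule pk_nonneg)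
  have PN: "P y \<le> N" for y unfolding P_def N_def by (rule pk_le_near[OF s t])
  have wint: "integrable lebesgue w" using uL unfolding L_s_def w_def[abs_def] p_def by blast
  have Pint: "integrable lebesgue P" unfolding P_def by (rule pk_integrable[OF s t])
  have P1: "integral\<^sup>L lebesgue P = 1" unfolding P_def using pk_integral[OF s t, of x] by simp
  have cA: "compact (closure A)" using Ab by simp
  have uA: "integrable lebesgue (\<lambda>y. indicator (closure A) y *\<^sub>R u y)"
    using uL cA unfolding L_s_def set_integrable_def by blast
  have eO: "integrable lebesgue (\<lambda>y. indicator \<Omega> y *\<^sub>R exp (\<alpha> * u y))"
    using eint unfolding set_integrable_def .
  have far': "P y * \<bar>u y\<bar> \<le> C * w y" if "y \<notin> A" for y
  proof -
    have "P y * \<bar>u y\<bar> \<le> C / (1 + norm y powr p) * \<bar>u y\<bar>"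
      using far[OF that] by (intro mult_right_mono) (auto simp: P_def p_def)
    then show ?thesis by (simp add: w_def)
  qed
  have i1: "integrable lebesgue (\<lambda>y. P y * (indicator A y * u y))"
  proof (rule Bochner_Integration.integrable_bound[where f="\<lambda>y. N * (indicator (closure A) y *\<^sub>R u y)"])
    show "integrable lebesgue (\<lambda>y. N * (indicator (closure A) y *\<^sub>R u y))"
      by (intro integrable_mult_right uA)
    show "(\<lambda>y. P y * (indicator A y * u y)) \<in> borel_measurable lebesgue" by measurable
    show "AE y in lebesgue. norm (P y * (indicator A y * u y)) \<le> norm (N * (indicator (closure A) y *\<^sub>R u y))"
    proof (intro AE_I2)
      fix y
      show "norm (P y * (indicator A y * u y)) \<le> norm (N * (indicator (closure A) y *\<^sub>R u y))"
      proof (cases "y \<in> A")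
        case True
        then have "y \<in> closure A" using closure_subset by blast
        have "P y \<le> \<bar>N\<bar>" using PN[of y] by linarith
        then have "P y * \<bar>u y\<bar> \<le> \<bar>N\<bar> * \<bar>u y\<bar>" by (rule mult_right_mono) simp
        then show ?thesis using True \<open>y \<in> closure A\<close> Pnn[of y] by (simp add: abs_mult)
      qed simp
    qed
  qed
  have i2: "integrable lebesgue (\<lambda>y. P y * (indicator (- A) y * u y))"
  proof (rule Bochner_Integration.integrable_bound[where f="\<lambda>y. C * w y"])
    show "integrable lebesgue (\<lambda>y. C * w y)" by (intro integrable_mult_right wint)
    show "(\<lambda>y. P y * (indicator (- A) y * u y)) \<in> borel_measurable lebesgue" by measurable
    show "AE y in lebesgue. norm (P y * (indicator (- A) y * u y)) \<le> norm (C * w y)"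
    proof (intro AE_I2)
      fix y
      show "norm (P y * (indicator (- A) y * u y)) \<le> norm (C * w y)"
      proof (cases "y \<in> A")
        case False
        then show ?thesis using far'[OF False] Pnn[of y] C
          by (simp add: abs_mult w_def)
      qed (simp add: w_def C)
    qed
  qed
  have split: "P y * u y = P y * (indicator A y * u y) + P y * (indicator (- A) y * u y)" for y
    by (cases "y \<in> A") auto
  have ext_eq: "ext s u x t = (LINT y|lebesgue. P y * (indicator A y * u y)) + (LINT y|lebesgue. P y * (indicator (- A) y * u y))"
    unfolding ext_def P_def[symmetric] split by (rule Bochner_Integration.integral_add[OF i1 i2])
  have J2: "(LINT y|lebesgue. P y * (indicator (- A) y * u y)) \<le> C * (LINT y|lebesgue. w y)"
  proof -
    have "(LINT y|lebesgue. P y * (indicator (- A) y * u y)) \<le> (LINT y|lebesgue. C * w y)"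
    proof (rule Bochner_Integration.integral_mono[OF i2])
      show "integrable lebesgue (\<lambda>y. C * w y)" by (intro integrable_mult_right wint)
      fix y
      show "P y * (indicator (- A) y * u y) \<le> C * w y"
      proof (cases "y \<in> A")
        case False
        have "P y * u y \<le> P y * \<bar>u y\<bar>" using Pnn[of y] by (intro mult_left_mono) auto
        then show ?thesis using far'[OF False] False by simp
      qed (simp add: w_def C)
    qed
    then show ?thesis by simp
  qed
  have gint: "integrable lebesgue (\<lambda>y. P y * g y)"
  proof (rule Bochner_Integration.integrable_bound[where f="\<lambda>y. N * (indicator \<Omega> y *\<^sub>R exp (\<alpha> * u y))"])
    show "integrable lebesgue (\<lambda>y. N * (indicator \<Omega> y *\<^sub>R exp (\<alpha> * u y)))"
      by (intro integrable_mult_right eO)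
    show "(\<lambda>y. P y * g y) \<in> borel_measurable lebesgue" unfolding g_def by measurable
    show "AE y in lebesgue. norm (P y * g y) \<le> norm (N * (indicator \<Omega> y *\<^sub>R exp (\<alpha> * u y)))"
    proof (intro AE_I2)
      fix y
      show "norm (P y * g y) \<le> norm (N * (indicator \<Omega> y *\<^sub>R exp (\<alpha> * u y)))"
      proof (cases "y \<in> A")
        case True
        then have "y \<in> \<Omega>" using A\<Omega> by blast
        have "P y \<le> \<bar>N\<bar>" using PN[of y] by linarith
        then have "P y * exp (\<alpha> * u y) \<le> \<bar>N\<bar> * exp (\<alpha> * u y)" by (rule mult_right_mono) simp
        then show ?thesis using True \<open>y \<in> \<Omega>\<close> Pnn[of y] by (simp add: g_def abs_mult)
      qed (simp add: g_def)
    qed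
  qed
  then show "integrable lebesgue (\<lambda>y. poisson_kernel s x t y * (indicator A y * exp (\<alpha> * u y)))"
    by (simp add: P_def g_def)
  define f where "f y = \<alpha> * (indicator A y * u y)" for y
  have fint: "integrable lebesgue (\<lambda>y. P y * f y)"
  proof -
    have "integrable lebesgue (\<lambda>y. \<alpha> * (P y * (indicator A y * u y)))"
      by (intro integrable_mult_right i1)
    then show ?thesis by (simp add: f_def algebra_simps)
  qed
  have expf: "exp (f y) = (if y \<in> A then exp (\<alpha> * u y) else 1)" for y
    by (simp add: f_def indicator_def)
  have Pef: "P y * exp (f y) \<le> P y * g y + P y" for y
    using Pnn[of y] by (simp add: expf g_def)
  have efint: "integrable lebesgue (\<lambda>y. P y * exp (f y))"
  proof (rule Bochner_Integration.integrable_bound[where f="\<lambda>y. P y * g y + P y"])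
    show "integrable lebesgue (\<lambda>y. P y * g y + P y)" by (intro Bochner_Integration.integrable_add gint Pint)
    show "(\<lambda>y. P y * exp (f y)) \<in> borel_measurable lebesgue" unfolding f_def by measurable
    show "AE y in lebesgue. norm (P y * exp (f y)) \<le> norm (P y * g y + P y)"
    proof (intro AE_I2)
      fix y
      have "0 \<le> P y * g y" using Pnn[of y] by (simp add: g_def)
      then show "norm (P y * exp (f y)) \<le> norm (P y * g y + P y)"
        using Pef[of y] Pnn[of y] by simp
    qed
  qed
  have jen: "exp (LINT y|lebesgue. P y * f y) \<le> (LINT y|lebesgue. P y * exp (f y))"
    by (rule exp_jensen[OF Pint Pnn P1 fint efint])
  also have "\<dots> \<le> (LINT y|lebesgue. P y * g y + P y)"
    by (rule Bochner_Integration.integral_mono[OF efint _ Pef]) (intro Bochner_Integration.integrable_add gint Pint)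
  also have "\<dots> = (LINT y|lebesgue. P y * g y) + 1"
    using P1 by (simp add: Bochner_Integration.integral_add[OF gint Pint])
  finally have jen': "exp (LINT y|lebesgue. P y * f y) \<le> (LINT y|lebesgue. P y * g y) + 1" .
  have fI: "(LINT y|lebesgue. P y * f y) = \<alpha> * (LINT y|lebesgue. P y * (indicator A y * u y))"
  proof -
    have "(LINT y|lebesgue. P y * f y) = (LINT y|lebesgue. \<alpha> * (P y * (indicator A y * u y)))"
      by (simp add: f_def algebra_simps)
    then show ?thesis by simp
  qed
  have "exp (\<alpha> * ext s u x t) = exp (LINT y|lebesgue. P y * f y) * exp (\<alpha> * (LINT y|lebesgue. P y * (indicator (- A) y * u y)))"
    unfolding ext_eq fI by (simp add: distrib_left exp_add)
  also have "\<dots> \<le> ((LINT y|lebesgue. P y * g y) + 1) * exp (\<alpha> * (C * (LINT y|lebesgue. w y)))"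
    using jen' J2 al order_trans[OF less_imp_le[OF exp_gt_zero] jen'] by (intro mult_mono) auto
  finally show "exp (\<alpha> * ext s u x t) \<le> exp (\<alpha> * (C * (LINT y|lebesgue. \<bar>u y\<bar> / (1 + norm y powr (real DIM('a) + 2 * s)))))
            * ((LINT y|lebesgue. poisson_kernel s x t y * (indicator A y * exp (\<alpha> * u y))) + 1)"
    by (simp add: w_def p_def P_def g_def mult.commute)
qed

lemma x_integral_bound:
  fixes g :: "'a::euclidean_space \<Rightarrow> real" and \<Omega>0 :: "'a set"
  assumes s: "0 < s" and t: "0 < t"
    and gm[measurable]: "g \<in> borel_measurable lebesgue" and gnn: "\<And>y. 0 \<le> g y"
    and O0[measurable]: "\<Omega>0 \<in> sets lebesgue"
  shows "(\<integral>\<^sup>+x. (1 + (\<integral>\<^sup>+y. ennreal (poisson_kernel s x t y * g y) \<partial>lebesgue)) * indicator \<Omega>0 x \<partial>lebesgue)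
          \<le> emeasure lebesgue \<Omega>0 + (\<integral>\<^sup>+y. ennreal (g y) \<partial>lebesgue)"
proof -
  interpret L: sigma_finite_measure "lebesgue :: 'a measure" by (rule sigma_finite_lebesgue)
  interpret LL: pair_sigma_finite "lebesgue :: 'a measure" "lebesgue :: 'a measure" ..
  define h where "h x y = ennreal (poisson_kernel s x t y * g y)" for x y
  have hm0: "(\<lambda>z. ennreal (poisson_kernel s (fst z) t (snd z) * g (snd z))) \<in> borel_measurable ((lebesgue :: 'a measure) \<Otimes>\<^sub>M lebesgue)"
    by measurable
  have hm: "case_prod h \<in> borel_measurable ((lebesgue :: 'a measure) \<Otimes>\<^sub>M lebesgue)"
    using hm0 by (simp add: h_def case_prod_beta')
  have Gm: "(\<lambda>x. \<integral>\<^sup>+y. h x y \<partial>lebesgue) \<in> borel_measurable lebesgue"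
    by (rule L.borel_measurable_nn_integral[OF hm])
  have "(\<integral>\<^sup>+x. (1 + (\<integral>\<^sup>+y. h x y \<partial>lebesgue)) * indicator \<Omega>0 x \<partial>lebesgue)
      \<le> (\<integral>\<^sup>+x. indicator \<Omega>0 x + (\<integral>\<^sup>+y. h x y \<partial>lebesgue) \<partial>lebesgue)"
    by (intro nn_integral_mono) (auto simp: indicator_def)
  also have "\<dots> = emeasure lebesgue \<Omega>0 + (\<integral>\<^sup>+x. (\<integral>\<^sup>+y. h x y \<partial>lebesgue) \<partial>lebesgue)"
    using Gm by (subst nn_integral_add) auto
  also have "(\<integral>\<^sup>+x. (\<integral>\<^sup>+y. h x y \<partial>lebesgue) \<partial>lebesgue) = (\<integral>\<^sup>+y. (\<integral>\<^sup>+x. h x y \<partial>lebesgue) \<partial>lebesgue)"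
    by (rule LL.Fubini'[OF hm, symmetric])
  also have "\<dots> = (\<integral>\<^sup>+y. ennreal (g y) \<partial>lebesgue)"
  proof (intro nn_integral_cong)
    fix y :: 'a
    have "(\<integral>\<^sup>+x. h x y \<partial>lebesgue) = (\<integral>\<^sup>+x. ennreal (poisson_kernel s y t x) * ennreal (g y) \<partial>lebesgue)"
      unfolding h_def by (intro nn_integral_cong) (simp add: pk_sym[of s _ t y] ennreal_mult[OF pk_nonneg gnn])
    also have "\<dots> = (\<integral>\<^sup>+x. ennreal (poisson_kernel s y t x) \<partial>lebesgue) * ennreal (g y)"
      by (rule nn_integral_multc) simp
    also have "\<dots> = ennreal (g y)" using pk_nn_integral[OF s t, of y] by simp
    finally show "(\<integral>\<^sup>+x. h x y \<partial>lebesgue) = ennreal (g y)" .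
  qed
  finally show ?thesis unfolding h_def .
qed

lemma powr_nn_fin:
  assumes a: "a > -1" and R: "0 < R"
  shows "(\<integral>\<^sup>+t. ennreal (indicator {0<..<R} t * t powr a) \<partial>lborel) < \<infinity>"
proof -
  have "(\<integral>\<^sup>+t. ennreal (indicator {0<..<R} t * t powr a) \<partial>lborel) \<le> (\<integral>\<^sup>+t. ennreal (indicator {0..R} t * t powr a) \<partial>lborel)"
    by (intro nn_integral_mono) (auto simp: indicator_def)
  also have "\<dots> = ennreal (R powr (a+1) / (a+1))"
    by (rule nn_integral_has_integral_lebesgue[OF _ has_integral_powr_from_0[OF a]]) (use R in auto)
  finally show ?thesis by (rule order.strict_trans1) simp
qed

theorem lemmaA1:
  fixes s \<alpha> :: real and \<Omega> :: "'a::euclidean_space set" and u :: "'a \<Rightarrow> real"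
  assumes "0 < s" and "s < 1" and "0 < \<alpha>"
    and "open \<Omega>"
    and "u \<in> L_s s"
    and "set_integrable lebesgue \<Omega> (\<lambda>x. exp (\<alpha> * u x))"
  shows "\<forall>\<Omega>0 R. open \<Omega>0 \<and> compact (closure \<Omega>0) \<and> closure \<Omega>0 \<subseteq> \<Omega> \<and> 0 < R \<longrightarrow>
           (\<integral>\<^sup>+ t. (\<integral>\<^sup>+ x. ennreal (t powr (1 - 2 * s) * exp (\<alpha> * ext s u x t))
                         * indicator \<Omega>0 x \<partial>lebesgue) * indicator {0<..<R} t \<partial>lborel) < \<infinity>"
proof (intro allI impI, elim conjE)
  note s = \<open>0 < s\<close> and s1 = \<open>s < 1\<close> and al = \<open>0 < \<alpha>\<close> and oO = \<open>open \<Omega>\<close>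
    and uL = \<open>u \<in> L_s s\<close> and eint = \<open>set_integrable lebesgue \<Omega> (\<lambda>x. exp (\<alpha> * u x))\<close>
  fix \<Omega>0 :: "'a set" and R :: real
  assume o0: "open \<Omega>0" and cpt: "compact (closure \<Omega>0)" and sub: "closure \<Omega>0 \<subseteq> \<Omega>" and R: "0 < R"
  define K where "K = closure \<Omega>0"
  obtain \<delta> where d: "\<delta> > 0" and dsub: "(\<Union>x\<in>K. ball x \<delta>) \<subseteq> \<Omega>"
    using compact_subset_open_imp_ball_epsilon_subset[OF cpt oO sub] unfolding K_def by blast
  define A where "A = (\<Union>x\<in>K. ball x \<delta>)"
  have oA: "open A" unfolding A_def by auto
  have Ameas[measurable]: "A \<in> sets lebesgue"
    using oA by (intro sets_completionI_sets) simp
  have AO: "A \<subseteq> \<Omega>" using dsub by (simp add: A_def)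
  obtain M0 where M0: "\<forall>x\<in>K. norm x \<le> M0"
    using compact_imp_bounded[OF cpt] unfolding K_def bounded_iff by blast
  define M where "M = max M0 0"
  have M: "0 \<le> M" "\<And>x. x \<in> K \<Longrightarrow> norm x \<le> M" using M0 by (auto simp: M_def intro: order_trans)
  have Ab: "bounded A"
  proof -
    have "A \<subseteq> cball 0 (M + \<delta>)"
    proof
      fix y assume "y \<in> A"
      then obtain x where x: "x \<in> K" "dist x y < \<delta>" by (auto simp: A_def)
      have "norm y \<le> norm x + dist x y"
        by (metis dist_norm norm_minus_commute norm_triangle_sub add.commute)
      then show "y \<in> cball 0 (M + \<delta>)" using M(2)[OF x(1)] x(2) by simp
    qed
    then show ?thesis using bounded_cball bounded_subset by blast
  qed
  define p where "p = real DIM('a) + 2 * s"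
  define c where "c = poisson_const s TYPE('a)"
  define Cf where "Cf = \<delta> powr (- p) + (1 + M / \<delta>) powr p"
  define C where "C = c * (R powr (2 * s) * Cf)"
  have C: "0 \<le> C" unfolding C_def Cf_def c_def by (intro mult_nonneg_nonneg add_nonneg_nonneg poisson_const_nonneg) auto
  define F where "F = C * (LINT y|lebesgue. \<bar>u y\<bar> / (1 + norm y powr p))"
  define g where "g y = indicator A y * exp (\<alpha> * u y)" for y
  have um[measurable]: "u \<in> borel_measurable lebesgue" using uL by (simp add: L_s_def)
  have gm[measurable]: "g \<in> borel_measurable lebesgue" unfolding g_def by measurable
  have gnn: "0 \<le> g y" for y by (simp add: g_def)
  have O0m[measurable]: "\<Omega>0 \<in> sets lebesgue" using o0 by (intro sets_completionI_sets) simp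
  have pw: "ennreal (t powr (1 - 2 * s) * exp (\<alpha> * ext s u x t)) * indicator \<Omega>0 x
      \<le> ennreal (t powr (1 - 2 * s) * exp (\<alpha> * F)) * ((1 + (\<integral>\<^sup>+y. ennreal (poisson_kernel s x t y * g y) \<partial>lebesgue)) * indicator \<Omega>0 x)"
    if t: "0 < t" "t < R" for x t
  proof (cases "x \<in> \<Omega>0")
    case False then show ?thesis by simp
  next
    case True
    then have xK: "x \<in> K" unfolding K_def using closure_subset by blast
    have far: "poisson_kernel s x t y \<le> C / (1 + norm y powr (real DIM('a) + 2 * s))" if "y \<notin> A" for y
    proof -
      have "\<delta> \<le> norm (x - y)" using that xK by (auto simp: A_def dist_norm)
      then have "kern s x t y \<le> R powr (2 * s) * Cf / (1 + norm y powr p)"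
        unfolding Cf_def p_def using kern_le_far[OF s t(1) _ d _ M(1) M(2)[OF xK]] t by simp
      then have "c * kern s x t y \<le> c * (R powr (2 * s) * Cf / (1 + norm y powr p))"
        by (intro mult_left_mono) (simp_all add: c_def poisson_const_nonneg)
      then show ?thesis by (simp add: poisson_kernel_def c_def C_def p_def)
    qed
    note pb = pointwise_bound[OF s al t(1) uL eint AO Ameas Ab far C]
    define L where "L = (LINT y|lebesgue. poisson_kernel s x t y * g y)"
    have L: "0 \<le> L" unfolding L_def by (intro integral_nonneg_AE) (simp add: pk_nonneg gnn)
    have eL: "ennreal L = (\<integral>\<^sup>+y. ennreal (poisson_kernel s x t y * g y) \<partial>lebesgue)"
      unfolding L_def using pb(2)
      by (subst nn_integral_eq_integral) (simp_all add: g_def pk_nonneg)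
    have b1: "exp (\<alpha> * ext s u x t) \<le> exp (\<alpha> * F) * (L + 1)"
      using pb(1) by (simp add: F_def L_def g_def p_def)
    have "t powr (1 - 2 * s) * exp (\<alpha> * ext s u x t) \<le> t powr (1 - 2 * s) * (exp (\<alpha> * F) * (L + 1))"
      using b1 by (intro mult_left_mono) auto
    then have "ennreal (t powr (1 - 2 * s) * exp (\<alpha> * ext s u x t)) \<le> ennreal (t powr (1 - 2 * s) * exp (\<alpha> * F) * (L + 1))"
      by (intro ennreal_leI) (simp add: mult.assoc)
    also have "\<dots> = ennreal (t powr (1 - 2 * s) * exp (\<alpha> * F)) * ennreal (L + 1)"
      using L by (intro ennreal_mult) auto
    also have "ennreal (L + 1) = 1 + ennreal L" using L by (simp add: ennreal_plus add.commute)
    finally show ?thesis using True eL by simp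
  qed
  define B where "B = emeasure lebesgue \<Omega>0 + (\<integral>\<^sup>+y. ennreal (g y) \<partial>lebesgue)"
  have xint: "(\<integral>\<^sup>+ x. ennreal (t powr (1 - 2 * s) * exp (\<alpha> * ext s u x t)) * indicator \<Omega>0 x \<partial>lebesgue)
      \<le> ennreal (t powr (1 - 2 * s) * exp (\<alpha> * F)) * B"
    if t: "0 < t" "t < R" for t
  proof -
    interpret L: sigma_finite_measure "lebesgue :: 'a measure" by (rule sigma_finite_lebesgue)
    have hm0: "(\<lambda>z. ennreal (poisson_kernel s (fst z) t (snd z) * g (snd z))) \<in> borel_measurable ((lebesgue :: 'a measure) \<Otimes>\<^sub>M lebesgue)"
      by measurable
    have hm: "case_prod (\<lambda>x y. ennreal (poisson_kernel s x t y * g y)) \<in> borel_measurable ((lebesgue :: 'a measure) \<Otimes>\<^sub>M lebesgue)"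
      using hm0 by (simp add: case_prod_beta')
    have Gm: "(\<lambda>x. \<integral>\<^sup>+y. ennreal (poisson_kernel s x t y * g y) \<partial>lebesgue) \<in> borel_measurable lebesgue"
      by (rule L.borel_measurable_nn_integral[OF hm])
    have "(\<integral>\<^sup>+ x. ennreal (t powr (1 - 2 * s) * exp (\<alpha> * ext s u x t)) * indicator \<Omega>0 x \<partial>lebesgue)
        \<le> (\<integral>\<^sup>+ x. ennreal (t powr (1 - 2 * s) * exp (\<alpha> * F)) * ((1 + (\<integral>\<^sup>+y. ennreal (poisson_kernel s x t y * g y) \<partial>lebesgue)) * indicator \<Omega>0 x) \<partial>lebesgue)"
      by (intro nn_integral_mono pw t)
    also have "\<dots> = ennreal (t powr (1 - 2 * s) * exp (\<alpha> * F)) * (\<integral>\<^sup>+ x. (1 + (\<integral>\<^sup>+y. ennreal (poisson_kernel s x t y * g y) \<partial>lebesgue)) * indicator \<Omega>0 x \<partial>lebesgue)"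
      using Gm by (subst nn_integral_cmult) auto
    also have "\<dots> \<le> ennreal (t powr (1 - 2 * s) * exp (\<alpha> * F)) * B"
      unfolding B_def by (intro mult_left_mono x_integral_bound[OF s t(1) gm gnn O0m]) auto
    finally show ?thesis .
  qed
  have Bfin: "B < \<infinity>"
  proof -
    have "emeasure lebesgue \<Omega>0 = emeasure lborel \<Omega>0"
      using o0 by (simp add: emeasure_completion)
    also have "\<dots> < \<infinity>"
      using cpt by (intro emeasure_bounded_finite) (meson bounded_subset closure_subset compact_imp_bounded)
    finally have e1: "emeasure lebesgue \<Omega>0 < \<infinity>" .
    have "(\<integral>\<^sup>+y. ennreal (g y) \<partial>lebesgue) \<le> (\<integral>\<^sup>+y. ennreal (indicator \<Omega> y *\<^sub>R exp (\<alpha> * u y)) \<partial>lebesgue)"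
      using AO by (intro nn_integral_mono) (auto simp: g_def indicator_def)
    also have "\<dots> = ennreal (LINT y|lebesgue. indicator \<Omega> y *\<^sub>R exp (\<alpha> * u y))"
      using eint unfolding set_integrable_def by (intro nn_integral_eq_integral) auto
    also have "\<dots> < \<infinity>" by simp
    finally have e2: "(\<integral>\<^sup>+y. ennreal (g y) \<partial>lebesgue) < \<infinity>" .
    show ?thesis unfolding B_def using e1 e2 by simp
  qed
  have "(\<integral>\<^sup>+ t. (\<integral>\<^sup>+ x. ennreal (t powr (1 - 2 * s) * exp (\<alpha> * ext s u x t))
                         * indicator \<Omega>0 x \<partial>lebesgue) * indicator {0<..<R} t \<partial>lborel)
      \<le> (\<integral>\<^sup>+ t. (ennreal (exp (\<alpha> * F)) * B) * ennreal (indicator {0<..<R} t * t powr (1 - 2 * s)) \<partial>lborel)"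
  proof (intro nn_integral_mono)
    fix t :: real
    show "(\<integral>\<^sup>+ x. ennreal (t powr (1 - 2 * s) * exp (\<alpha> * ext s u x t)) * indicator \<Omega>0 x \<partial>lebesgue) * indicator {0<..<R} t
        \<le> (ennreal (exp (\<alpha> * F)) * B) * ennreal (indicator {0<..<R} t * t powr (1 - 2 * s))"
    proof (cases "t \<in> {0<..<R}")
      case False then show ?thesis by simp
    next
      case True
      then have t: "0 < t" "t < R" by auto
      have "ennreal (t powr (1 - 2 * s) * exp (\<alpha> * F)) * B = (ennreal (exp (\<alpha> * F)) * B) * ennreal (indicator {0<..<R} t * t powr (1 - 2 * s))"
        using True by (simp add: ennreal_mult' mult_ac)
      then show ?thesis using xint[OF t] True by simp
    qed
  qed
  also have "\<dots> = (ennreal (exp (\<alpha> * F)) * B) * (\<integral>\<^sup>+ t. ennreal (indicator {0<..<R} t * t powr (1 - 2 * s)) \<partial>lborel)"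
    by (subst nn_integral_cmult) auto
  also have "\<dots> < \<infinity>"
    using Bfin powr_nn_fin[of "1 - 2 * s" R] s1 R
    by (simp add: ennreal_mult_less_top)
  finally show "(\<integral>\<^sup>+ t. (\<integral>\<^sup>+ x. ennreal (t powr (1 - 2 * s) * exp (\<alpha> * ext s u x t))
                         * indicator \<Omega>0 x \<partial>lebesgue) * indicator {0<..<R} t \<partial>lborel) < \<infinity>" .
qed

end
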